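(* Let $\mathbb{K}$ be a totally ordered field which is non-Archimedean and Cantor $\kappa$-complete for a cardinal $\kappa$. Then $\kappa\le\mathrm{card}(\mathbb{K})$.
   Context: For a cardinal $\kappa$, $\mathbb{K}$ is Cantor $\kappa$-complete if every family of fewer than $\kappa$ closed bounded intervals in $\mathbb{K}$ with the finite intersection property has non-empty intersection. Archimedean: for every $x$ there is $n\in\mathbb{N}$ with $|x|<n$. *)

theory Defs
  imports Main
begin

definition archimedean_field :: "'a::linordered_field itself \<Rightarrow> bool" where
  "archimedean_field _ \<longleftrightarrow> (\<forall>x::'a. \<exists>n::nat. \<bar>x\<bar> < of_nat n)"

definition closed_bounded_interval :: "'a::linorder set \<Rightarrow> bool" where
  "closed_bounded_interval S \<longleftrightarrow> (\<exists>a b. a \<le> b \<and> S = {a..b})"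

definition fip :: "'a set set \<Rightarrow> bool" where
  "fip F \<longleftrightarrow> (\<forall>G. G \<subseteq> F \<longrightarrow> finite G \<longrightarrow> G \<noteq> {} \<longrightarrow> \<Inter>G \<noteq> {})"

definition cantor_complete :: "'b rel \<Rightarrow> 'a::linordered_field itself \<Rightarrow> bool" where
  "cantor_complete \<kappa> _ \<longleftrightarrow>
     (\<forall>F :: 'a set set. (card_of F, \<kappa>) \<in> ordLess \<longrightarrow>
        (\<forall>S\<in>F. closed_bounded_interval S) \<longrightarrow> fip F \<longrightarrow> \<Inter>F \<noteq> {})"

end

theory Submission
  imports Defs
begin

lemma fin_bound:
  fixes B :: "'a::linordered_field set"
  assumes "finite B" "\<forall>y\<in>B. \<exists>n::nat. y \<le> of_nat n"
  shows "\<exists>N::nat. \<forall>y\<in>B. y + 1 \<le> of_nat N"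
  using assms
proof (induction B rule: finite_induct)
  case empty then show ?case by simp
next
  case (insert b B)
  then obtain N where N: "\<forall>y\<in>B. y + 1 \<le> of_nat N" by auto
  from insert obtain m::nat where m: "b \<le> of_nat m" by auto
  show ?case
  proof (intro exI[of _ "max N (m+1)"] ballI)
    fix y assume "y \<in> insert b B"
    then show "y + 1 \<le> of_nat (max N (m+1))"
    proof
      assume "y = b"
      have "b + 1 \<le> of_nat (m+1)" using m by simp
      also have "\<dots> \<le> of_nat (max N (m+1))" by (rule of_nat_mono) simp
      finally show ?thesis using \<open>y = b\<close> by simp
    next
      assume "y \<in> B" then show ?thesis using N
        by (meson max.cobounded1 of_nat_mono order_trans)
    qed
  qed
qed

theorem mainTheorem15:
  fixes \<kappa> :: "'b rel"
  assumes "Card_order \<kappa>"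
    and "\<not> archimedean_field TYPE('a::linordered_field)"
    and "cantor_complete \<kappa> TYPE('a)"
  shows "(\<kappa>, card_of (UNIV :: 'a set)) \<in> ordLeq"
proof (rule ccontr)
  assume nl: "(\<kappa>, card_of (UNIV :: 'a set)) \<notin> ordLeq"
  have lt: "(card_of (UNIV :: 'a set), \<kappa>) \<in> ordLess"
    using nl not_ordLeq_iff_ordLess assms(1) card_of_Well_order card_order_on_well_order_on by blast
  from assms(2) obtain x :: 'a where x: "\<forall>n::nat. \<not> \<bar>x\<bar> < of_nat n"
    unfolding archimedean_field_def by auto
  define H where "H = \<bar>x\<bar> + 1"
  define U where "U = {y::'a. \<forall>n::nat. of_nat n < y}"
  have HU: "of_nat n < H" for n :: nat
    using x[rule_format, of n] unfolding H_def by simp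
  define I where "I y = (if y \<in> U then {0..y-1} else {y+1..H})" for y :: 'a
  define F where "F = range I"
  have cF: "(card_of F, \<kappa>) \<in> ordLess"
    unfolding F_def using card_of_image ordLeq_ordLess_trans lt by blast
  have cb: "\<forall>S\<in>F. closed_bounded_interval S"
  proof
    fix S assume "S \<in> F"
    then obtain y where S: "S = I y" unfolding F_def by auto
    show "closed_bounded_interval S"
    proof (cases "y \<in> U")
      case True
      then have "of_nat 1 < y" unfolding U_def by blast
      then show ?thesis using True unfolding S I_def closed_bounded_interval_def by auto
    next
      case False
      then obtain n::nat where "y \<le> of_nat n" unfolding U_def by (auto simp: not_less)
      then have "y + 1 \<le> H" using HU[of "Suc n"] by simp
      then show ?thesis using False unfolding S I_def closed_bounded_interval_def by auto
    qed
  qed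
  have fF: "fip F" unfolding fip_def
  proof (intro allI impI)
    fix G assume G: "G \<subseteq> F" "finite G" "G \<noteq> {}"
    then obtain A where A: "finite A" "G = I ` A"
      unfolding F_def by (meson finite_subset_image)
    have "\<forall>y\<in>A - U. \<exists>n::nat. y \<le> of_nat n" unfolding U_def by (auto simp: not_less)
    then obtain N::nat where N: "\<forall>y\<in>A - U. y + 1 \<le> of_nat N"
      using fin_bound[of "A - U"] A(1) by blast
    have "of_nat N \<in> \<Inter>G"
    proof -
      have "of_nat N \<in> I y" if "y \<in> A" for y
      proof (cases "y \<in> U")
        case True
        then have "of_nat (Suc N) < y" unfolding U_def by blast
        then show ?thesis using True unfolding I_def by auto
      next
        case False
        then show ?thesis using N that HU[of N] unfolding I_def by auto
      qed
      then show ?thesis using A by auto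
    qed
    then show "\<Inter>G \<noteq> {}" by blast
  qed
  have "\<Inter>F \<noteq> {}" using assms(3) cF cb fF unfolding cantor_complete_def by blast
  then obtain z where z: "z \<in> \<Inter>F" by blast
  then have "z \<in> I z" unfolding F_def by blast
  then show False unfolding I_def by (auto split: if_splits)
qed

end
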